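(* Let $\psi\in\Psi$ satisfy $\lim_{t\to\infty}\frac{\psi(t\psi(t))}{\psi(t)}=1$. Let $x\in M_\psi$ and $c>\|x\|_{M_\psi}$. Then $n_x(1/t)\le ct\psi(t)$ for all sufficiently large $t$.
   Context: $\Psi$ is the class of concave increasing functions $\psi$ on $[0,\infty)$ with $\psi(\infty)=\infty$, $\psi(t)=O(t)$ as $t\to0$, $\psi(t)=o(t)$ as $t\to\infty$. For bounded measurable $x$ on $(0,\infty)$, $n_x(\lambda)=m(\{s:|x(s)|>\lambda\})$ and $x^*$ is the nonincreasing right-continuous rearrangement of $|x|$. $M_\psi$ is the space of bounded measurable $x$ with $\|x\|_{M_\psi}=\sup_{t>0}\frac1{\psi(t)}\int_0^tx^*(s)ds<\infty$. *)

theory Defs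
  imports "HOL-Analysis.Analysis" "HOL-Library.Landau_Symbols"
begin

definition Psi_class :: "(real \<Rightarrow> real) set" where
  "Psi_class = {\<psi>. concave_on {0..} \<psi> \<and> mono_on {0..} \<psi>
      \<and> filterlim \<psi> at_top at_top
      \<and> \<psi> \<in> O[at_right 0](\<lambda>t. t)
      \<and> \<psi> \<in> o[at_top](\<lambda>t. t)}"

text \<open>Functions on (0,inf) are modelled as real functions; only values on (0,inf) matter.\<close>
definition bdd_meas :: "(real \<Rightarrow> real) \<Rightarrow> bool" where
  "bdd_meas x \<longleftrightarrow> set_borel_measurable lborel {0<..} x \<and> bounded (x ` {0<..})"

definition distr_fun :: "(real \<Rightarrow> real) \<Rightarrow> real \<Rightarrow> ennreal" where
  "distr_fun x l = emeasure lborel {s \<in> {0<..}. \<bar>x s\<bar> > l}"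

definition rearr :: "(real \<Rightarrow> real) \<Rightarrow> real \<Rightarrow> real" where
  "rearr x t = Inf {l. l \<ge> 0 \<and> distr_fun x l \<le> ennreal t}"

definition Mpsi_quot :: "(real \<Rightarrow> real) \<Rightarrow> (real \<Rightarrow> real) \<Rightarrow> real \<Rightarrow> real" where
  "Mpsi_quot \<psi> x t = (LINT s:{0..t}|lborel. rearr x s) / \<psi> t"

definition in_Mpsi :: "(real \<Rightarrow> real) \<Rightarrow> (real \<Rightarrow> real) \<Rightarrow> bool" where
  "in_Mpsi \<psi> x \<longleftrightarrow> bdd_meas x \<and> bdd_above (Mpsi_quot \<psi> x ` {0<..})"

definition Mpsi_norm :: "(real \<Rightarrow> real) \<Rightarrow> (real \<Rightarrow> real) \<Rightarrow> real" where
  "Mpsi_norm \<psi> x = (SUP t\<in>{0<..}. Mpsi_quot \<psi> x t)"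

end

theory Submission imports Defs begin

lemma distr_sets:
  assumes "bdd_meas x"
  shows "{s \<in> {0<..}. \<bar>x s\<bar> > l} \<in> sets lborel"
proof -
  have m: "(\<lambda>s. indicator {0<..} s *\<^sub>R x s) \<in> borel_measurable lborel"
    using assms unfolding bdd_meas_def set_borel_measurable_def by auto
  have "{s \<in> {0<..}. \<bar>x s\<bar> > l} = {s. 0 < s \<and> \<bar>indicator {0<..} s *\<^sub>R x s\<bar> > l}"
    by (auto simp: indicator_def)
  also have "\<dots> \<in> sets lborel" using m by measurable
  finally show ?thesis .
qed

lemma distr_antimono:
  assumes "bdd_meas x" "l \<le> l'"
  shows "distr_fun x l' \<le> distr_fun x l"
  unfolding distr_fun_def using assms
  by (intro emeasure_mono distr_sets) auto

lemma bound_ex: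
  assumes "bdd_meas x"
  obtains B where "B \<ge> 0" "\<And>s. s > 0 \<Longrightarrow> \<bar>x s\<bar> \<le> B"
proof -
  obtain B where "\<forall>y\<in>x ` {0<..}. norm y \<le> B" using assms unfolding bdd_meas_def bounded_iff by auto
  then have "\<And>s. s > 0 \<Longrightarrow> \<bar>x s\<bar> \<le> max B 0" by force
  then show ?thesis using that[of "max B 0"] by auto
qed

lemma rearr_props:
  assumes "bdd_meas x"
  obtains B where "B \<ge> 0" "\<And>u. 0 \<le> rearr x u" "\<And>u. rearr x u \<le> B"
    "\<And>u v. u \<le> v \<Longrightarrow> rearr x v \<le> rearr x u"
    "\<And>u. {l. l \<ge> 0 \<and> distr_fun x l \<le> ennreal u} \<noteq> {}"
proof -
  obtain B where B: "B \<ge> 0" "\<And>s. s > 0 \<Longrightarrow> \<bar>x s\<bar> \<le> B" using bound_ex assms by blast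
  have d0: "distr_fun x B = 0" unfolding distr_fun_def using B
    by (metis (mono_tags, lifting) emeasure_empty empty_Collect_eq greaterThan_iff not_less)
  have ne: "B \<in> {l. l \<ge> 0 \<and> distr_fun x l \<le> ennreal u}" for u using d0 B by auto
  have bb: "bdd_below {l. l \<ge> 0 \<and> distr_fun x l \<le> ennreal u}" for u
    by (rule bdd_belowI[of _ 0]) auto
  show ?thesis
  proof (rule that[of B])
    show "0 \<le> rearr x u" for u unfolding rearr_def using ne by (intro cInf_greatest) auto
    show "rearr x u \<le> B" for u unfolding rearr_def using ne bb by (intro cInf_lower) auto
    show "rearr x v \<le> rearr x u" if "u \<le> v" for u v unfolding rearr_def
      using ne bb that
      by (intro cInf_superset_mono) (auto intro: order_trans ennreal_leI)
    show "{l. l \<ge> 0 \<and> distr_fun x l \<le> ennreal u} \<noteq> {}" for u using ne by auto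
  qed (use B in auto)
qed

lemma key:
  assumes "bdd_meas x" "t > 0" "s > 0" "ennreal s < distr_fun x (1/t)"
  shows "s / t \<le> (LINT u:{0..s}|lborel. rearr x u)"
proof -
  obtain B where B: "B \<ge> 0" "\<And>u. 0 \<le> rearr x u" "\<And>u. rearr x u \<le> B"
    "\<And>u v. u \<le> v \<Longrightarrow> rearr x v \<le> rearr x u"
    "\<And>u. {l. l \<ge> 0 \<and> distr_fun x l \<le> ennreal u} \<noteq> {}"
    using rearr_props[OF assms(1)] by blast
  have "mono (\<lambda>u. - rearr x u)" using B(4) by (auto simp: mono_def)
  then have "(\<lambda>u. - rearr x u) \<in> borel_measurable borel" by (rule borel_measurable_mono)
  then have "(\<lambda>u. - (- rearr x u)) \<in> borel_measurable borel" by measurable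
  then have meas: "rearr x \<in> borel_measurable lborel" by simp
  have int1: "set_integrable lborel {0..s} (rearr x)"
    unfolding set_integrable_def
    by (rule integrableI_bounded_set_indicator[where B=B]) (use meas B assms in auto)
  have int2: "set_integrable lborel {0..s} (\<lambda>_. 1/t)"
    unfolding set_integrable_def
    by (rule integrableI_bounded_set_indicator[where B="1/t"]) (use assms in auto)
  have ge: "1/t \<le> rearr x u" if "u \<in> {0..s}" for u
    unfolding rearr_def
  proof (rule cInf_greatest)
    fix l assume l: "l \<in> {l. l \<ge> 0 \<and> distr_fun x l \<le> ennreal u}"
    show "1/t \<le> l"
    proof (rule ccontr)
      assume "\<not> 1/t \<le> l"
      then have "distr_fun x (1/t) \<le> distr_fun x l" using distr_antimono[OF assms(1)] by simp
      also have "\<dots> \<le> ennreal u" using l by simp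
      also have "\<dots> \<le> ennreal s" using that by (auto intro: ennreal_leI)
      finally show False using assms(4) by simp
    qed
  qed (use B in auto)
  have "(LINT u:{0..s}|lborel. 1/t) \<le> (LINT u:{0..s}|lborel. rearr x u)"
    by (rule set_integral_mono[OF int2 int1 ge])
  moreover have "(LINT u:{0..s}|lborel. 1/t) = s/t"
    using assms by (subst set_integral_const) auto
  ultimately show ?thesis using assms(2) by auto
qed

theorem lemma2p2:
  fixes \<psi> x :: "real \<Rightarrow> real" and c :: real
  assumes "\<psi> \<in> Psi_class"
    and "((\<lambda>t. \<psi> (t * \<psi> t) / \<psi> t) \<longlongrightarrow> 1) at_top"
    and "in_Mpsi \<psi> x"
    and "c > Mpsi_norm \<psi> x"
  shows "\<forall>\<^sub>F t in at_top. distr_fun x (1 / t) \<le> ennreal (c * t * \<psi> t)"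
proof -
  define N where "N = Mpsi_norm \<psi> x"
  have mono: "mono_on {0..} \<psi>" and lim: "filterlim \<psi> at_top at_top"
    using assms(1) unfolding Psi_class_def by auto
  have bm: "bdd_meas x" and bdd: "bdd_above (Mpsi_quot \<psi> x ` {0<..})"
    using assms(3) unfolding in_Mpsi_def by auto
  have quot_le: "Mpsi_quot \<psi> x s \<le> N" if "s > 0" for s
    unfolding N_def Mpsi_norm_def using that bdd by (intro cSUP_upper) auto
  obtain B where B: "B \<ge> 0" "\<And>u. 0 \<le> rearr x u" "\<And>u. rearr x u \<le> B"
    "\<And>u v. u \<le> v \<Longrightarrow> rearr x v \<le> rearr x u"
    "\<And>u. {l. l \<ge> 0 \<and> distr_fun x l \<le> ennreal u} \<noteq> {}"
    using rearr_props[OF bm] by blast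
  have "\<forall>\<^sub>F t in at_top. \<psi> t \<ge> 1" using lim by (simp add: filterlim_at_top)
  then obtain T where T: "\<And>t. t \<ge> T \<Longrightarrow> \<psi> t \<ge> 1" by (auto simp: eventually_at_top_linorder)
  define t0 where "t0 = max T 1"
  have "\<psi> t0 \<ge> 1" "t0 > 0" using T unfolding t0_def by auto
  have "0 \<le> (LINT u:{0..t0}|lborel. rearr x u)"
    using B(2) unfolding set_lebesgue_integral_def
    by (intro integral_nonneg_AE) (auto simp: indicator_def)
  then have "0 \<le> Mpsi_quot \<psi> x t0" unfolding Mpsi_quot_def using \<open>\<psi> t0 \<ge> 1\<close> by simp
  then have N0: "N \<ge> 0" using quot_le[OF \<open>t0 > 0\<close>] by simp
  have cN: "N < c" using assms(4) N_def by simp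
  then have c0: "c > 0" using N0 by simp
  define K where "K = 2 * c / (c + N)"
  have K1: "K > 1" unfolding K_def using cN N0 by (simp add: field_simps)
  have NK: "N * K < c" unfolding K_def using cN N0 c0 by (simp add: field_simps)
  define a where "a = sqrt K"
  have a1: "a > 1" and aa: "a * a = K" unfolding a_def using K1 by auto
  define c' where "c' = max c 1"
  have c'1: "c' \<ge> 1" "c \<le> c'" unfolding c'_def by auto
  have E1: "\<forall>\<^sub>F t in at_top. \<psi> (t * \<psi> t) / \<psi> t < a"
    using order_tendstoD(2)[OF assms(2) a1] .
  have flc: "filterlim (\<lambda>t. c' * t) at_top at_top"
    using c'1 by (intro filterlim_tendsto_pos_mult_at_top[OF tendsto_const]) (auto simp: filterlim_ident)
  have E2: "\<forall>\<^sub>F t in at_top. \<psi> (c' * t * \<psi> (c' * t)) / \<psi> (c' * t) < a"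
    using eventually_compose_filterlim[OF E1 flc] .
  have E3: "\<forall>\<^sub>F t in at_top. \<psi> t \<ge> max c' (1 / c)" using lim unfolding filterlim_at_top by blast
  have E4: "\<forall>\<^sub>F t in at_top. (t::real) \<ge> 1" using eventually_ge_at_top[of "1::real"] by simp
  show ?thesis
  proof (rule eventually_mono[OF eventually_conj[OF E1 eventually_conj[OF E2 eventually_conj[OF E3 E4]]]])
    fix t assume H: "\<psi> (t * \<psi> t) / \<psi> t < a \<and> \<psi> (c' * t * \<psi> (c' * t)) / \<psi> (c' * t) < a
       \<and> max c' (1 / c) \<le> \<psi> t \<and> 1 \<le> t"
    then have t1: "t \<ge> 1" and pc': "\<psi> t \<ge> c'" and pc: "\<psi> t \<ge> 1/c" by auto
    have pt: "\<psi> t > 0" using pc' c'1 by simp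
    have r1: "\<psi> (t * \<psi> t) < a * \<psi> t" using H pt by (simp add: divide_less_eq)
    have "c' * t \<le> t * \<psi> t" using pc' t1 by (simp add: mult.commute mult_left_mono)
    then have "\<psi> (c' * t) \<le> \<psi> (t * \<psi> t)" using c'1 t1
      by (intro mono_onD[OF mono]) auto
    with r1 have s1: "\<psi> (c' * t) < a * \<psi> t" by simp
    have "t \<le> c' * t" using c'1 t1 by simp
    then have ptc: "\<psi> t \<le> \<psi> (c' * t)" using t1 by (intro mono_onD[OF mono]) auto
    then have pct: "\<psi> (c' * t) > 0" using pt by simp
    have r2: "\<psi> (c' * t * \<psi> (c' * t)) < a * \<psi> (c' * t)" using H pct by (simp add: divide_less_eq)
    define s where "s = c * t * \<psi> t"
    have "s \<le> c' * t * \<psi> (c' * t)" unfolding s_def using c'1 ptc t1 pt c0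
      by (intro mult_mono) auto
    then have "\<psi> s \<le> \<psi> (c' * t * \<psi> (c' * t))" using c0 t1 pt pct c'1 unfolding s_def
      by (intro mono_onD[OF mono]) auto
    also have "\<dots> < a * \<psi> (c' * t)" by (rule r2)
    also have "\<dots> \<le> a * (a * \<psi> t)" using s1 a1 by simp
    finally have psK: "\<psi> s < K * \<psi> t" using aa by (simp add: mult.assoc[symmetric])
    have "c * \<psi> t \<ge> 1" using pc c0 by (simp add: field_simps)
    then have "t * 1 \<le> t * (c * \<psi> t)" using t1 by (intro mult_left_mono) auto
    then have "t \<le> s" unfolding s_def by (simp add: ac_simps)
    then have pts: "\<psi> t \<le> \<psi> s" using t1 by (intro mono_onD[OF mono]) auto
    have s0: "s > 0" using \<open>t \<le> s\<close> t1 by simp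
    have ps0: "\<psi> s > 0" using pts pt by simp
    show "distr_fun x (1 / t) \<le> ennreal (c * t * \<psi> t)"
    proof (rule ccontr)
      assume "\<not> ?thesis"
      then have "ennreal s < distr_fun x (1/t)" unfolding s_def by simp
      from key[OF bm _ s0 this] t1 have "s / t \<le> (LINT u:{0..s}|lborel. rearr x u)" by simp
      then have "(s / t) / \<psi> s \<le> Mpsi_quot \<psi> x s" unfolding Mpsi_quot_def using ps0
        by (metis divide_right_mono less_imp_le)
      then have "(s / t) / \<psi> s \<le> N" using quot_le[OF s0] by simp
      then have "s / t \<le> N * \<psi> s" using ps0 by (metis pos_divide_le_eq)
      moreover have "s / t = c * \<psi> t" unfolding s_def using t1 by simp
      moreover have "N * \<psi> s \<le> N * (K * \<psi> t)" using psK N0 by (simp add: mult_left_mono)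
      moreover have "N * (K * \<psi> t) < c * \<psi> t" using NK pt by (simp add: mult.assoc[symmetric])
      ultimately show False by simp
    qed
  qed
qed

end
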